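(* Let $\mathcal G=(V,E,r)$ be a non-trivial, connected graph. (1) $\mathsf D(\mathbf A(\mathcal G))=2|E|-|V|+1$. (2) An atom $a$ of $\mathbf A(\mathcal G)$ satisfies $\ell(a)=\mathsf D(\mathbf A(\mathcal G))$ if and only if $\operatorname{supp}(a)$ is a tree containing every vertex of $\mathcal G$ of degree at least $2$. In particular, every spanning tree of $\mathcal G$ yields (via its indicator) an atom of maximal sequence-length. If $\mathcal G$ has minimum vertex degree at least $2$, then the atoms of maximal sequence-length are in bijection with the spanning trees of $\mathcal G$.
   Context: A graph $\mathcal G=(V,E,r)$ consists of a finite vertex set $V$, a finite edge set $E$ disjoint from $V$, and a map $r$ assigning to each edge a two-element subset of $V$; multiple edges allowed, no loops. Non-trivial means $\mathcal G$ has more than one vertex. $\deg_{\mathcal G}(v)$ is the number of edges incident with $v$. An agglomeration on $\mathcal G$ is a function $a\colon V\cup E\to\mathbb N_0$ with $a(v)\ge a(e)$ whenever $v$ is incident with $e$; $\mathbf A(\mathcal G)$ is the monoid of agglomerations under pointwise addition. An atom is a nonzero element not a sum of two nonzero elements. $\operatorname{supp}(a)$ is the subgraph of vertices and edges where $a$ is positive. The sequence-length is $\ell(a)=\sum_{v\in V}\deg_{\mathcal G}(v)a(v)-\sum_{e\in E}a(e)$, and the Davenport constant is $\mathsf D(\mathbf A(\mathcal G))=\max\{\ell(a): a\text{ an atom of }\mathbf A(\mathcal G)\}$. *)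

theory Defs
  imports Main
begin

text \<open>A graph (V,E,r): finite vertex set V, finite edge set E (vertices and edges live in
different types, hence are disjoint), r assigns to each edge a two-element set of vertices.\<close>

definition graph :: "'v set \<Rightarrow> 'e set \<Rightarrow> ('e \<Rightarrow> 'v set) \<Rightarrow> bool" where
  "graph V E r \<longleftrightarrow> finite V \<and> finite E \<and> (\<forall>e\<in>E. r e \<subseteq> V \<and> card (r e) = 2)"

definition deg :: "'e set \<Rightarrow> ('e \<Rightarrow> 'v set) \<Rightarrow> 'v \<Rightarrow> nat" where
  "deg E r v = card {e\<in>E. v \<in> r e}"

definition adj_rel :: "'e set \<Rightarrow> ('e \<Rightarrow> 'v set) \<Rightarrow> ('v \<times> 'v) set" where
  "adj_rel E' r = {(v, w). \<exists>e\<in>E'. r e = {v, w}}"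

definition connected_graph :: "'v set \<Rightarrow> 'e set \<Rightarrow> ('e \<Rightarrow> 'v set) \<Rightarrow> bool" where
  "connected_graph V' E' r \<longleftrightarrow> (\<forall>v\<in>V'. \<forall>w\<in>V'. (v, w) \<in> (adj_rel E' r)\<^sup>*)"

text \<open>A cycle: distinct vertices vs!0,...,vs!(k-1) and distinct edges es!0,...,es!(k-1),
k \<ge> 2, with es!i joining vs!i and vs!((i+1) mod k). (k = 2: a pair of parallel edges.)\<close>
definition is_cycle :: "'e set \<Rightarrow> ('e \<Rightarrow> 'v set) \<Rightarrow> 'v list \<Rightarrow> 'e list \<Rightarrow> bool" where
  "is_cycle E' r vs es \<longleftrightarrow> length vs = length es \<and> length es \<ge> 2 \<and> distinct vs \<and> distinct es
     \<and> set es \<subseteq> E'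
     \<and> (\<forall>i<length es. r (es ! i) = {vs ! i, vs ! ((i + 1) mod length es)})"

definition is_tree :: "'v set \<Rightarrow> 'e set \<Rightarrow> ('e \<Rightarrow> 'v set) \<Rightarrow> bool" where
  "is_tree V' E' r \<longleftrightarrow> V' \<noteq> {} \<and> connected_graph V' E' r \<and> \<not> (\<exists>vs es. is_cycle E' r vs es)"

text \<open>Agglomerations: functions on V \<union> E (encoded as the sum type, zero outside V and E).\<close>
definition agg :: "'v set \<Rightarrow> 'e set \<Rightarrow> ('e \<Rightarrow> 'v set) \<Rightarrow> ('v + 'e \<Rightarrow> nat) \<Rightarrow> bool" where
  "agg V E r a \<longleftrightarrow>
     (\<forall>v. v \<notin> V \<longrightarrow> a (Inl v) = 0) \<and> (\<forall>e. e \<notin> E \<longrightarrow> a (Inr e) = 0)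
     \<and> (\<forall>e\<in>E. \<forall>v\<in>r e. a (Inr e) \<le> a (Inl v))"

definition is_atom :: "'v set \<Rightarrow> 'e set \<Rightarrow> ('e \<Rightarrow> 'v set) \<Rightarrow> ('v + 'e \<Rightarrow> nat) \<Rightarrow> bool" where
  "is_atom V E r a \<longleftrightarrow> agg V E r a \<and> a \<noteq> (\<lambda>_. 0)
     \<and> \<not> (\<exists>b c. agg V E r b \<and> agg V E r c \<and> b \<noteq> (\<lambda>_. 0) \<and> c \<noteq> (\<lambda>_. 0)
              \<and> a = (\<lambda>x. b x + c x))"

definition seq_len :: "'v set \<Rightarrow> 'e set \<Rightarrow> ('e \<Rightarrow> 'v set) \<Rightarrow> ('v + 'e \<Rightarrow> nat) \<Rightarrow> int" where
  "seq_len V E r a = (\<Sum>v\<in>V. int (deg E r v * a (Inl v))) - (\<Sum>e\<in>E. int (a (Inr e)))"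

definition davenport :: "'v set \<Rightarrow> 'e set \<Rightarrow> ('e \<Rightarrow> 'v set) \<Rightarrow> int" where
  "davenport V E r = Max (seq_len V E r ` {a. is_atom V E r a})"

definition supp_V :: "'v set \<Rightarrow> ('v + 'e \<Rightarrow> nat) \<Rightarrow> 'v set" where
  "supp_V V a = {v\<in>V. a (Inl v) > 0}"

definition supp_E :: "'e set \<Rightarrow> ('v + 'e \<Rightarrow> nat) \<Rightarrow> 'e set" where
  "supp_E E a = {e\<in>E. a (Inr e) > 0}"

definition tree_indicator :: "'v set \<Rightarrow> 'e set \<Rightarrow> ('v + 'e \<Rightarrow> nat)" where
  "tree_indicator V T = (\<lambda>x. case x of Inl v \<Rightarrow> (if v \<in> V then 1 else 0)
                                     | Inr e \<Rightarrow> (if e \<in> T then 1 else 0))"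

end

theory Submission
  imports Defs
begin

lemma adj_sym: "(x,y) \<in> adj_rel F r \<Longrightarrow> (y,x) \<in> adj_rel F r"
  unfolding adj_rel_def by (auto simp: insert_commute)

lemma adj_rtrancl_sym: "(x,y) \<in> (adj_rel F r)\<^sup>* \<Longrightarrow> (y,x) \<in> (adj_rel F r)\<^sup>*"
proof (induction rule: rtrancl_induct)
  case base then show ?case by simp
next
  case (step y z) then show ?case using adj_sym by (meson converse_rtrancl_into_rtrancl)
qed

lemma adj_mono: "F \<subseteq> G \<Longrightarrow> adj_rel F r \<subseteq> adj_rel G r"
  unfolding adj_rel_def by auto

lemma bfs:
  assumes conn: "connected_graph S F r" and v0: "v0 \<in> S"
    and ends: "\<forall>e\<in>F. r e \<subseteq> S"
  shows "\<exists>p d. inj_on p (S - {v0}) \<and> (\<forall>x\<in>S-{v0}. p x \<in> F \<and> (\<exists>u. u \<in> S \<and> r (p x) = {u,x} \<and> (d::'v \<Rightarrow> nat) u < d x))"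
proof -
  let ?R = "adj_rel F r"
  define d where "d x = (LEAST n. (v0,x) \<in> ?R ^^ n)" for x
  have ex: "\<exists>e. e \<in> F \<and> (\<exists>u. r e = {u,x} \<and> d u < d x)" if "x \<in> S" "x \<noteq> v0" for x
  proof -
    have "(v0,x) \<in> ?R\<^sup>*" using conn v0 that unfolding connected_graph_def by auto
    then obtain n where n: "(v0,x) \<in> ?R ^^ n" using rtrancl_power by blast
    hence dn: "(v0,x) \<in> ?R ^^ d x" unfolding d_def by (rule LeastI)
    have "d x \<noteq> 0" proof
      assume "d x = 0" then show False using dn that by simp
    qed
    then obtain m where m: "d x = Suc m" by (cases "d x") auto
    then obtain u where u1: "(v0,u) \<in> ?R^^m" and u2: "(u,x) \<in> ?R" using dn by auto
    have "d u \<le> m" unfolding d_def using u1 by (rule Least_le)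
    then show ?thesis using u2 m unfolding adj_rel_def by force
  qed
  define p where "p x = (SOME e. e \<in> F \<and> (\<exists>u. r e = {u,x} \<and> d u < d x))" for x
  have pp: "p x \<in> F \<and> (\<exists>u. r (p x) = {u,x} \<and> d u < d x)" if "x \<in> S" "x \<noteq> v0" for x
    unfolding p_def by (rule someI_ex) (use ex[OF that] in blast)
  have inj: "inj_on p (S - {v0})"
  proof (rule inj_onI)
    fix x y assume x: "x \<in> S - {v0}" and y: "y \<in> S - {v0}" and eq: "p x = p y"
    obtain u where u: "r (p x) = {u,x}" "d u < d x" using pp x by blast
    obtain w where w: "r (p y) = {w,y}" "d w < d y" using pp y by blast
    show "x = y"
    proof (rule ccontr)
      assume "x \<noteq> y"
      then have "x = w" "y = u" using u w eq by (auto simp: doubleton_eq_iff)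
      then show False using u w by simp
    qed
  qed
  have "\<forall>x\<in>S-{v0}. p x \<in> F \<and> (\<exists>u. u \<in> S \<and> r (p x) = {u,x} \<and> d u < d x)"
  proof
    fix x assume x: "x \<in> S - {v0}"
    then obtain u where u: "r (p x) = {u,x}" "d u < d x" "p x \<in> F" using pp by blast
    then have "u \<in> S" using ends by auto
    then show "p x \<in> F \<and> (\<exists>u. u \<in> S \<and> r (p x) = {u,x} \<and> d u < d x)" using u by blast
  qed
  then show ?thesis using inj by blast
qed

lemma path_exists:
  assumes "(a,b) \<in> (adj_rel F r)\<^sup>*"
  shows "\<exists>xs es. length xs = Suc (length es) \<and> distinct xs \<and> set es \<subseteq> F \<and>
     (\<forall>i<length es. r (es!i) = {xs!i, xs!Suc i}) \<and> xs!0 = a \<and> last xs = b"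
using assms proof (induction rule: rtrancl_induct)
  case base show ?case by (intro exI[of _ "[a]"] exI[of _ "[]"]) auto
next
  case (step c d)
  obtain xs es where P: "length xs = Suc (length es)" "distinct xs" "set es \<subseteq> F"
     "\<forall>i<length es. r (es!i) = {xs!i, xs!Suc i}" "xs!0 = a" "last xs = c" using step.IH by blast
  obtain e where e: "e \<in> F" "r e = {c,d}" using step.hyps(2) unfolding adj_rel_def by auto
  show ?case
  proof (cases "d \<in> set xs")
    case True
    then obtain j where j: "j < length xs" "xs!j = d" by (auto simp: in_set_conv_nth)
    show ?thesis
    proof (intro exI[of _ "take (Suc j) xs"] exI[of _ "take j es"] conjI)
      show "length (take (Suc j) xs) = Suc (length (take j es))" using P j by auto
      show "distinct (take (Suc j) xs)" using P by auto
      show "set (take j es) \<subseteq> F" using P by (meson order_trans set_take_subset)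
      show "\<forall>i<length (take j es). r (take j es ! i) = {take (Suc j) xs ! i, take (Suc j) xs ! Suc i}"
        using P by auto
      show "take (Suc j) xs ! 0 = a" using P by auto
      have "take (Suc j) xs \<noteq> []" using j by (cases xs) auto
      then show "last (take (Suc j) xs) = d" using j P
        by (simp add: last_conv_nth min_absorb2 Suc_leI)
    qed
  next
    case False
    have xsne: "xs \<noteq> []" using P by auto
    show ?thesis
    proof (intro exI[of _ "xs @ [d]"] exI[of _ "es @ [e]"] conjI)
      show "length (xs @ [d]) = Suc (length (es @ [e]))" using P by auto
      show "distinct (xs @ [d])" using P False by auto
      show "set (es @ [e]) \<subseteq> F" using P e by auto
      show "\<forall>i<length (es @ [e]). r ((es @ [e]) ! i) = {(xs @ [d]) ! i, (xs @ [d]) ! Suc i}"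
      proof (intro allI impI)
        fix i assume i: "i < length (es @ [e])"
        show "r ((es @ [e]) ! i) = {(xs @ [d]) ! i, (xs @ [d]) ! Suc i}"
        proof (cases "i < length es")
          case True then show ?thesis using P by (auto simp: nth_append)
        next
          case False
          then have "i = length es" using i by auto
          moreover have "xs ! length es = c" using P xsne by (simp add: last_conv_nth)
          ultimately show ?thesis using P e by (auto simp: nth_append)
        qed
      qed
      show "(xs @ [d]) ! 0 = a" using P xsne by (auto simp: nth_append)
      show "last (xs @ [d]) = d" by simp
    qed
  qed
qed

lemma path_distinct_edges:
  assumes "length xs = Suc (length es)" "distinct xs" "\<forall>i<length es. r (es!i) = {xs!i, xs!Suc i}"
  shows "distinct es"
  unfolding distinct_conv_nth
proof (intro allI impI)
  fix i j assume ij: "i < length es" "j < length es" "i \<noteq> j"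
  show "es ! i \<noteq> es ! j"
  proof
    assume eq: "es ! i = es ! j"
    have "xs!i \<in> {xs!j, xs!Suc j}" using assms(3) ij eq by (metis insertI1)
    hence "i = Suc j" using ij assms(1,2) by (auto simp: nth_eq_iff_index_eq)
    have "xs!j \<in> {xs!i, xs!Suc i}" using assms(3) ij eq by (metis insertI1)
    hence "j = Suc i" using ij assms(1,2) by (auto simp: nth_eq_iff_index_eq)
    with \<open>i = Suc j\<close> show False by simp
  qed
qed

lemma conn_card:
  assumes "finite S" "finite F" "connected_graph S F r" "S \<noteq> {}" "\<forall>e\<in>F. r e \<subseteq> S"
  shows "card S \<le> card F + 1"
proof -
  obtain v0 where v0: "v0 \<in> S" using assms by auto
  obtain p and d :: "_ \<Rightarrow> nat" where P: "inj_on p (S - {v0})"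
     "\<forall>x\<in>S-{v0}. p x \<in> F \<and> (\<exists>u. u \<in> S \<and> r (p x) = {u,x} \<and> d u < d x)"
    using bfs[OF assms(3) v0 assms(5)] by blast
  have "card (S - {v0}) = card (p ` (S - {v0}))" using P by (simp add: card_image)
  also have "\<dots> \<le> card F" using P assms by (intro card_mono) auto
  finally show ?thesis using v0 assms by simp
qed

lemma conn_nocycle:
  assumes "finite S" "finite F" "connected_graph S F r" "S \<noteq> {}" "\<forall>e\<in>F. r e \<subseteq> S"
    "card F + 1 \<le> card S"
  shows "\<not> is_cycle F r vs es"
proof
  assume cyc: "is_cycle F r vs es"
  obtain v0 where v0: "v0 \<in> S" using assms by auto
  obtain p and d :: "_ \<Rightarrow> nat" where P: "inj_on p (S - {v0})"
     "\<forall>x\<in>S-{v0}. p x \<in> F \<and> (\<exists>u. u \<in> S \<and> r (p x) = {u,x} \<and> d u < d x)"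
    using bfs[OF assms(3) v0 assms(5)] by blast
  have cI: "card (p ` (S - {v0})) = card S - 1" using P v0 assms by (simp add: card_image)
  have IF: "p ` (S - {v0}) = F"
    using P cI assms by (intro card_seteq) auto
  let ?k = "length es"
  have k: "length vs = ?k" "?k \<ge> 2" "distinct es" "set es \<subseteq> F"
    "\<forall>i<?k. r (es ! i) = {vs ! i, vs ! ((i + 1) mod ?k)}"
    using cyc unfolding is_cycle_def by auto
  define M where "M = Max (d ` set vs)"
  have "M \<in> d ` set vs" unfolding M_def using k by (intro Max_in) auto
  then obtain j where j: "j < ?k" "d (vs ! j) = M" using k by (auto simp: in_set_conv_nth)
  have Mmax: "d (vs ! i) \<le> M" if "i < ?k" for i
    unfolding M_def using that k by (intro Max_ge) auto
  have claim: "es ! i = p (vs ! j)" if i: "i < ?k" "vs ! j \<in> r (es ! i)" for i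
  proof -
    have "es ! i \<in> F" using k i by auto
    then obtain x where x: "x \<in> S - {v0}" "es ! i = p x" using IF by auto
    then obtain u where u: "r (p x) = {u,x}" "d u < d x" using P by blast
    have "x \<in> r (es ! i)" using u x by simp
    then have "x = vs ! i \<or> x = vs ! ((i + 1) mod ?k)" using k i by auto
    moreover have "(i + 1) mod ?k < ?k" using mod_less_divisor[of ?k "i+1"] k(2) by linarith
    ultimately have "d x \<le> M" using Mmax i by auto
    show ?thesis
    proof (cases "x = vs ! j")
      case True then show ?thesis using x by simp
    next
      case False
      then have "vs ! j = u" using i u x by auto
      then show ?thesis using u j \<open>d x \<le> M\<close> by simp
    qed
  qed
  define i2 where "i2 = (if j = 0 then ?k - 1 else j - 1)"
  have i2: "i2 < ?k" "(i2 + 1) mod ?k = j" "i2 \<noteq> j"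
  proof -
    show "i2 < ?k" using j(1) k(2) unfolding i2_def by auto
    show "i2 \<noteq> j" using j(1) k(2) unfolding i2_def by presburger
    show "(i2 + 1) mod ?k = j"
    proof (cases "j = 0")
      case True
      then have "i2 + 1 = ?k" using k(2) unfolding i2_def by simp
      then show ?thesis using True by simp
    next
      case False
      then have "i2 + 1 = j" unfolding i2_def by simp
      then show ?thesis using j(1) by simp
    qed
  qed
  have "es ! j = p (vs ! j)" using claim j k by auto
  moreover have "es ! i2 = p (vs ! j)" using claim i2 k by auto
  ultimately have "es ! j = es ! i2" by simp
  then have "j = i2" using k j i2 by (simp add: nth_eq_iff_index_eq)
  then show False using i2 by simp
qed

lemma tree_card:
  assumes "finite S" "finite F" "connected_graph S F r" "S \<noteq> {}"
    "\<forall>e\<in>F. r e \<subseteq> S \<and> card (r e) = 2"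
    "\<not> (\<exists>vs es. is_cycle F r vs es)"
  shows "card F + 1 \<le> card S"
proof (rule ccontr)
  assume nle: "\<not> card F + 1 \<le> card S"
  have ends: "\<forall>e\<in>F. r e \<subseteq> S" using assms(5) by blast
  obtain v0 where v0: "v0 \<in> S" using assms(4) by blast
  obtain p and d :: "_ \<Rightarrow> nat" where P: "inj_on p (S - {v0})"
     "\<forall>x\<in>S-{v0}. p x \<in> F \<and> (\<exists>u. u \<in> S \<and> r (p x) = {u,x} \<and> d u < d x)"
    using bfs[OF assms(3) v0 ends] by blast
  let ?I = "p ` (S - {v0})"
  have cI: "card ?I = card S - 1" using P v0 assms(1) by (simp add: card_image)
  have "card S > 0" using v0 assms(1) by (auto simp: card_gt_0_iff)
  have "?I \<noteq> F"
  proof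
    assume "?I = F" then have "card F = card S - 1" using cI by simp
    then show False using nle \<open>card S > 0\<close> by linarith
  qed
  moreover have "?I \<subseteq> F" using P by auto
  ultimately obtain f where f: "f \<in> F" "f \<notin> ?I" by auto
  have "card (r f) = 2" using assms(5) f by blast
  then obtain a b where ab: "r f = {a,b}" "a \<noteq> b" by (auto simp: card_2_iff)
  have abS: "a \<in> S" "b \<in> S" using ab ends f by auto
  have reach: "x \<in> S \<longrightarrow> (x, v0) \<in> (adj_rel ?I r)\<^sup>*" for x
  proof (induction x rule: measure_induct_rule[of d])
    case (less x)
    show ?case
    proof
      assume xS: "x \<in> S"
      show "(x, v0) \<in> (adj_rel ?I r)\<^sup>*"
      proof (cases "x = v0")
        case True then show ?thesis by simp
      next
        case False
        then obtain u where u: "u \<in> S" "r (p x) = {u,x}" "d u < d x" using P xS by blast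
        have px: "p x \<in> ?I" using xS False by blast
        have "r (p x) = {x,u}" using u by (simp add: insert_commute)
        then have "(x,u) \<in> adj_rel ?I r" unfolding adj_rel_def using px by blast
        moreover have "(u, v0) \<in> (adj_rel ?I r)\<^sup>*" using less u by blast
        ultimately show ?thesis by (meson converse_rtrancl_into_rtrancl)
      qed
    qed
  qed
  have "(a, v0) \<in> (adj_rel ?I r)\<^sup>*" "(b, v0) \<in> (adj_rel ?I r)\<^sup>*" using reach abS by auto
  then have "(a, b) \<in> (adj_rel ?I r)\<^sup>*" using rtrancl_trans adj_rtrancl_sym by metis
  moreover have "adj_rel ?I r \<subseteq> adj_rel (F - {f}) r" using \<open>?I \<subseteq> F\<close> f by (intro adj_mono) auto
  ultimately have "(a, b) \<in> (adj_rel (F - {f}) r)\<^sup>*" using rtrancl_mono by blast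
  from path_exists[OF this] obtain xs es where W: "length xs = Suc (length es)" "distinct xs" "set es \<subseteq> F - {f}"
     "\<forall>i<length es. r (es!i) = {xs!i, xs!Suc i}" "xs!0 = a" "last xs = b"
    by blast
  have de: "distinct es" using path_distinct_edges[OF W(1,2,4)] .
  have esne: "es \<noteq> []"
  proof
    assume "es = []"
    then have "length xs = 1" using W by simp
    then have "last xs = xs ! 0" by (cases xs) auto
    then show False using W ab by simp
  qed
  have "xs \<noteq> []" using W by auto
  then have lastb: "xs ! length es = b" using W by (simp add: last_conv_nth)
  have "is_cycle F r xs (es @ [f])"
    unfolding is_cycle_def
  proof (intro conjI allI impI)
    show "length xs = length (es @ [f])" using W by simp
    show "2 \<le> length (es @ [f])" using esne by (cases es) auto
    show "distinct xs" using W by simp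
    show "distinct (es @ [f])" using de W by auto
    show "set (es @ [f]) \<subseteq> F" using W f by auto
    fix i assume i: "i < length (es @ [f])"
    show "r ((es @ [f]) ! i) = {xs ! i, xs ! ((i + 1) mod length (es @ [f]))}"
    proof (cases "i < length es")
      case True then show ?thesis using W by (auto simp: nth_append)
    next
      case False
      then have "i = length es" using i by simp
      then show ?thesis using W ab lastb by (auto simp: nth_append)
    qed
  qed
  then show False using assms(6) by blast
qed

lemma atom_agg: "is_atom V E r a \<Longrightarrow> agg V E r a"
  unfolding is_atom_def by blast

lemma atom_le1:
  assumes at: "is_atom V E r a" shows "a x \<le> 1"
proof (rule ccontr)
  assume ax: "\<not> a x \<le> 1"
  define b where "b = (\<lambda>y. min (a y) 1)"
  define c where "c = (\<lambda>y. a y - min (a y) 1)"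
  have ag: "agg V E r a" using at by (rule atom_agg)
  have "agg V E r b" using ag unfolding agg_def b_def
  proof (intro conjI allI impI ballI)
    fix e v assume "(\<forall>v. v \<notin> V \<longrightarrow> a (Inl v) = 0) \<and> (\<forall>e. e \<notin> E \<longrightarrow> a (Inr e) = 0) \<and>
          (\<forall>e\<in>E. \<forall>v\<in>r e. a (Inr e) \<le> a (Inl v))" "e \<in> E" "v \<in> r e"
    then have "a (Inr e) \<le> a (Inl v)" by blast
    then show "min (a (Inr e)) 1 \<le> min (a (Inl v)) 1" by (simp add: min_def)
  qed auto
  moreover have "agg V E r c" using ag unfolding agg_def c_def
  proof (intro conjI allI impI ballI)
    fix e v assume "(\<forall>v. v \<notin> V \<longrightarrow> a (Inl v) = 0) \<and> (\<forall>e. e \<notin> E \<longrightarrow> a (Inr e) = 0) \<and>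
          (\<forall>e\<in>E. \<forall>v\<in>r e. a (Inr e) \<le> a (Inl v))" "e \<in> E" "v \<in> r e"
    then have "a (Inr e) \<le> a (Inl v)" by blast
    then show "a (Inr e) - min (a (Inr e)) 1 \<le> a (Inl v) - min (a (Inl v)) 1" by (simp add: min_def; arith)
  qed auto
  moreover have "b \<noteq> (\<lambda>_. 0)"
  proof
    assume "b = (\<lambda>_. 0)" then have "b x = 0" by simp
    then show False using ax unfolding b_def by simp
  qed
  moreover have "c \<noteq> (\<lambda>_. 0)"
  proof
    assume "c = (\<lambda>_. 0)" then have "c x = 0" by simp
    then show False using ax unfolding c_def by simp
  qed
  moreover have "a = (\<lambda>y. b y + c y)" unfolding b_def c_def by auto
  ultimately show False using at unfolding is_atom_def by blast
qed

lemma agg_ends: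
  assumes g: "graph V E r" and ag: "agg V E r a" and e: "e \<in> supp_E E a"
  shows "r e \<subseteq> supp_V V a"
proof
  fix v assume v: "v \<in> r e"
  have "e \<in> E" "a (Inr e) > 0" using e unfolding supp_E_def by auto
  moreover have "v \<in> V" using g v \<open>e \<in> E\<close> unfolding graph_def by auto
  moreover have "a (Inr e) \<le> a (Inl v)" using ag v \<open>e \<in> E\<close> unfolding agg_def by blast
  ultimately show "v \<in> supp_V V a" unfolding supp_V_def by auto
qed

lemma agg_nonzero_vertex:
  assumes g: "graph V E r" and ag: "agg V E r a" and nz: "a \<noteq> (\<lambda>_. 0)"
  shows "\<exists>v\<in>V. a (Inl v) > 0"
proof -
  obtain x where x: "a x \<noteq> 0" using nz by auto
  show ?thesis
  proof (cases x)
    case (Inl v)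
    then have "v \<in> V" using ag x unfolding agg_def by auto
    then show ?thesis using x Inl by auto
  next
    case (Inr e)
    then have eE: "e \<in> E" using ag x unfolding agg_def by auto
    then have "card (r e) = 2" using g unfolding graph_def by auto
    then obtain v where v: "v \<in> r e" by (auto simp: card_2_iff)
    have "v \<in> V" using g v eE unfolding graph_def by auto
    moreover have "a (Inr e) \<le> a (Inl v)" using ag v eE unfolding agg_def by blast
    ultimately show ?thesis using x Inr by (intro bexI[of _ v]) auto
  qed
qed

lemma atom_conn:
  assumes g: "graph V E r" and at: "is_atom V E r a"
  shows "connected_graph (supp_V V a) (supp_E E a) r"
  unfolding connected_graph_def
proof (intro ballI, rule ccontr)
  fix v w assume v: "v \<in> supp_V V a" and w: "w \<in> supp_V V a"
    and nc: "(v,w) \<notin> (adj_rel (supp_E E a) r)\<^sup>*"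
  let ?R = "adj_rel (supp_E E a) r"
  have ag: "agg V E r a" using at by (rule atom_agg)
  define C where "C = {x. (v,x) \<in> ?R\<^sup>*}"
  define b where "b = (\<lambda>y. case y of Inl u \<Rightarrow> if u \<in> C then a y else 0
                          | Inr e \<Rightarrow> if (\<exists>u\<in>r e. u \<in> C) then a y else 0)"
  define c where "c = (\<lambda>y. a y - b y)"
  have ble: "b y \<le> a y" for y unfolding b_def by (cases y) auto
  have key: "x \<in> C" if "e \<in> E" "a (Inr e) > 0" "u \<in> r e" "u \<in> C" "x \<in> r e" for e u x
  proof (cases "u = x")
    case True then show ?thesis using that by simp
  next
    case False
    have "card (r e) = 2" using g that unfolding graph_def by auto
    then obtain y z where yz: "r e = {y,z}" by (auto simp: card_2_iff)
    then have "r e = {u,x}" using that False by auto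
    moreover have "e \<in> supp_E E a" using that unfolding supp_E_def by auto
    ultimately have "(u,x) \<in> ?R" unfolding adj_rel_def by blast
    then show ?thesis using that unfolding C_def by auto
  qed
  have agb: "agg V E r b"
    unfolding agg_def
  proof (intro conjI allI impI ballI)
    fix u assume "u \<notin> V" then show "b (Inl u) = 0" using ble[of "Inl u"] ag unfolding agg_def by auto
  next
    fix e assume "e \<notin> E" then show "b (Inr e) = 0" using ble[of "Inr e"] ag unfolding agg_def by auto
  next
    fix e x assume e: "e \<in> E" and x: "x \<in> r e"
    have le: "a (Inr e) \<le> a (Inl x)" using ag e x unfolding agg_def by blast
    show "b (Inr e) \<le> b (Inl x)"
    proof (cases "(\<exists>u\<in>r e. u \<in> C) \<and> a (Inr e) > 0")
      case True
      then have "x \<in> C" using key e x by blast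
      then show ?thesis using True le unfolding b_def by auto
    next
      case False
      then have "b (Inr e) = 0" unfolding b_def by auto
      then show ?thesis by simp
    qed
  qed
  have agc: "agg V E r c"
    unfolding agg_def
  proof (intro conjI allI impI ballI)
    fix u assume "u \<notin> V" then show "c (Inl u) = 0" using ag unfolding agg_def c_def by auto
  next
    fix e assume "e \<notin> E" then show "c (Inr e) = 0" using ag unfolding agg_def c_def by auto
  next
    fix e x assume e: "e \<in> E" and x: "x \<in> r e"
    have le: "a (Inr e) \<le> a (Inl x)" using ag e x unfolding agg_def by blast
    show "c (Inr e) \<le> c (Inl x)"
    proof (cases "\<exists>u\<in>r e. u \<in> C")
      case True
      then have "c (Inr e) = 0" unfolding c_def b_def by auto
      then show ?thesis by simp
    next
      case False
      then have "x \<notin> C" using x by blast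
      then show ?thesis using False le unfolding c_def b_def by auto
    qed
  qed
  have vC: "v \<in> C" unfolding C_def by simp
  have wC: "w \<notin> C" unfolding C_def using nc by simp
  have av: "a (Inl v) > 0" "a (Inl w) > 0" using v w unfolding supp_V_def by auto
  have "b \<noteq> (\<lambda>_. 0)"
  proof
    assume "b = (\<lambda>_. 0)" then have "b (Inl v) = 0" by simp
    then show False using vC av unfolding b_def by simp
  qed
  moreover have "c \<noteq> (\<lambda>_. 0)"
  proof
    assume "c = (\<lambda>_. 0)" then have "c (Inl w) = 0" by simp
    then show False using wC av unfolding c_def b_def by simp
  qed
  moreover have "a = (\<lambda>y. b y + c y)" unfolding c_def using ble by (auto simp: fun_eq_iff)
  ultimately show False using at agb agc unfolding is_atom_def by blast
qed

lemma conn_atom: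
  assumes g: "graph V E r" and ag: "agg V E r a" and le1: "\<forall>x. a x \<le> 1"
    and v: "v \<in> V" "a (Inl v) > 0"
    and conn: "connected_graph (supp_V V a) (supp_E E a) r"
  shows "is_atom V E r a"
proof -
  have nz: "a \<noteq> (\<lambda>_. 0)"
  proof
    assume "a = (\<lambda>_. 0)" then show False using v by simp
  qed
  have "False" if b: "agg V E r b" "b \<noteq> (\<lambda>_. 0)" and c: "agg V E r c" "c \<noteq> (\<lambda>_. 0)"
     and abc: "a = (\<lambda>x. b x + c x)" for b c
  proof -
    have ax: "a x = b x + c x" for x using abc by simp
    obtain u where u: "u \<in> V" "b (Inl u) > 0" using agg_nonzero_vertex[OF g b(1,2)] by blast
    obtain w where w: "w \<in> V" "c (Inl w) > 0" using agg_nonzero_vertex[OF g c(1,2)] by blast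
    have uS: "u \<in> supp_V V a" "w \<in> supp_V V a" using u w ax unfolding supp_V_def by auto
    let ?R = "adj_rel (supp_E E a) r"
    have "(u,w) \<in> ?R\<^sup>*" using conn uS unfolding connected_graph_def by blast
    then have "b (Inl w) > 0"
    proof (induction rule: rtrancl_induct)
      case base then show ?case using u by simp
    next
      case (step y z)
      obtain e where e: "e \<in> supp_E E a" "r e = {y,z}" using step.hyps(2) unfolding adj_rel_def by auto
      have eE: "e \<in> E" "a (Inr e) > 0" using e unfolding supp_E_def by auto
      have "a (Inr e) = 1" using eE(2) le1[rule_format, of "Inr e"] by linarith
      have "c (Inr e) = 0"
      proof (rule ccontr)
        assume "c (Inr e) \<noteq> 0"
        moreover have "c (Inr e) \<le> c (Inl y)" using c(1) eE e unfolding agg_def by blast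
        ultimately have "c (Inl y) > 0" by simp
        then show False using step.IH ax[of "Inl y"] le1[rule_format, of "Inl y"] by linarith
      qed
      then have "b (Inr e) = 1" using ax[of "Inr e"] \<open>a (Inr e) = 1\<close> by simp
      moreover have "b (Inr e) \<le> b (Inl z)" using b(1) eE e unfolding agg_def by blast
      ultimately show ?case by simp
    qed
    then show False using w ax[of "Inl w"] le1[rule_format, of "Inl w"] by linarith
  qed
  then show ?thesis using ag nz unfolding is_atom_def by blast
qed

lemma bfs_conn:
  assumes "finite S" "connected_graph S F r" "S \<noteq> {}" "\<forall>e\<in>F. r e \<subseteq> S"
  shows "\<exists>T\<subseteq>F. connected_graph S T r \<and> card T + 1 = card S"
proof -
  obtain v0 where v0: "v0 \<in> S" using assms(3) by blast
  obtain p and d :: "_ \<Rightarrow> nat" where P: "inj_on p (S - {v0})"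
     "\<forall>x\<in>S-{v0}. p x \<in> F \<and> (\<exists>u. u \<in> S \<and> r (p x) = {u,x} \<and> d u < d x)"
    using bfs[OF assms(2) v0 assms(4)] by blast
  let ?I = "p ` (S - {v0})"
  have cI: "card ?I = card S - 1" using P v0 assms(1) by (simp add: card_image)
  have "card S > 0" using v0 assms(1) by (auto simp: card_gt_0_iff)
  then have cI2: "card ?I + 1 = card S" using cI by linarith
  have reach: "x \<in> S \<longrightarrow> (x, v0) \<in> (adj_rel ?I r)\<^sup>*" for x
  proof (induction x rule: measure_induct_rule[of d])
    case (less x)
    show ?case
    proof
      assume xS: "x \<in> S"
      show "(x, v0) \<in> (adj_rel ?I r)\<^sup>*"
      proof (cases "x = v0")
        case True then show ?thesis by simp
      next
        case False
        then obtain u where u: "u \<in> S" "r (p x) = {u,x}" "d u < d x" using P xS by blast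
        have px: "p x \<in> ?I" using xS False by blast
        have "r (p x) = {x,u}" using u by (simp add: insert_commute)
        then have "(x,u) \<in> adj_rel ?I r" unfolding adj_rel_def using px by blast
        moreover have "(u, v0) \<in> (adj_rel ?I r)\<^sup>*" using less u by blast
        ultimately show ?thesis by (meson converse_rtrancl_into_rtrancl)
      qed
    qed
  qed
  have "connected_graph S ?I r"
    unfolding connected_graph_def
  proof (intro ballI)
    fix x y assume "x \<in> S" "y \<in> S"
    then have "(x, v0) \<in> (adj_rel ?I r)\<^sup>*" "(y, v0) \<in> (adj_rel ?I r)\<^sup>*" using reach by auto
    then show "(x, y) \<in> (adj_rel ?I r)\<^sup>*" using rtrancl_trans adj_rtrancl_sym by metis
  qed
  moreover have "?I \<subseteq> F" using P by auto
  ultimately show ?thesis using cI2 by blast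
qed

lemma handshake:
  assumes g: "graph V E r" shows "(\<Sum>v\<in>V. deg E r v) = 2 * card E"
proof -
  have fin: "finite V" "finite E" using g unfolding graph_def by auto
  have "(\<Sum>v\<in>V. deg E r v) = (\<Sum>v\<in>V. \<Sum>e\<in>E. if v \<in> r e then 1 else 0)"
  proof (rule sum.cong)
    fix v assume "v \<in> V"
    have "deg E r v = (\<Sum>e\<in>{e\<in>E. v \<in> r e}. 1)" unfolding deg_def by simp
    also have "\<dots> = (\<Sum>e\<in>E. if v \<in> r e then 1 else 0)" using fin(2) by (rule sum.inter_filter)
    finally show "deg E r v = (\<Sum>e\<in>E. if v \<in> r e then 1 else 0)" .
  qed simp
  also have "\<dots> = (\<Sum>e\<in>E. \<Sum>v\<in>V. if v \<in> r e then 1 else 0)" by (rule sum.swap)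
  also have "\<dots> = (\<Sum>e\<in>E. 2)"
  proof (rule sum.cong)
    fix e assume e: "e \<in> E"
    have "(\<Sum>v\<in>V. if v \<in> r e then 1 else 0) = (\<Sum>v\<in>{v\<in>V. v \<in> r e}. 1::nat)"
      using fin(1) by (rule sum.inter_filter[symmetric])
    also have "{v\<in>V. v \<in> r e} = r e" using g e unfolding graph_def by auto
    also have "(\<Sum>v\<in>r e. 1::nat) = 2" using g e unfolding graph_def by simp
    finally show "(\<Sum>v\<in>V. if v \<in> r e then 1 else 0) = (2::nat)" .
  qed simp
  finally show ?thesis by simp
qed

lemma seq_len_01:
  assumes g: "graph V E r" and ag: "agg V E r a" and le1: "\<forall>x. a x \<le> 1"
  shows "seq_len V E r a = 2 * int (card E) - int (\<Sum>v\<in>V - supp_V V a. deg E r v) - int (card (supp_E E a))"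
proof -
  let ?S = "supp_V V a"
  have fin: "finite V" "finite E" using g unfolding graph_def by auto
  have a01: "y = 0 \<or> y = 1" if "y \<le> (1::nat)" for y using that by linarith
  have 1: "(\<Sum>v\<in>V. deg E r v * a (Inl v)) = (\<Sum>v\<in>?S. deg E r v)"
  proof -
    have "(\<Sum>v\<in>V. deg E r v * a (Inl v)) = (\<Sum>v\<in>V. if 0 < a (Inl v) then deg E r v else 0)"
    proof (rule sum.cong)
      fix v assume "v \<in> V"
      show "deg E r v * a (Inl v) = (if 0 < a (Inl v) then deg E r v else 0)"
        using a01[OF le1[rule_format, of "Inl v"]] by auto
    qed simp
    also have "\<dots> = (\<Sum>v\<in>?S. deg E r v)" unfolding supp_V_def using fin by (simp add: sum.inter_filter)
    finally show ?thesis .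
  qed
  have 2: "(\<Sum>v\<in>V. deg E r v) = (\<Sum>v\<in>V - ?S. deg E r v) + (\<Sum>v\<in>?S. deg E r v)"
    using fin by (intro sum.subset_diff) (auto simp: supp_V_def)
  have 3: "(\<Sum>e\<in>E. a (Inr e)) = card (supp_E E a)"
  proof -
    have "(\<Sum>e\<in>E. a (Inr e)) = (\<Sum>e\<in>E. if 0 < a (Inr e) then 1 else 0)"
    proof (rule sum.cong)
      fix e assume "e \<in> E"
      show "a (Inr e) = (if 0 < a (Inr e) then 1 else 0)"
        using a01[OF le1[rule_format, of "Inr e"]] by auto
    qed simp
    also have "\<dots> = (\<Sum>e\<in>supp_E E a. 1)" unfolding supp_E_def using fin(2) by (rule sum.inter_filter[symmetric])
    finally show ?thesis by simp
  qed
  have "seq_len V E r a = int (\<Sum>v\<in>V. deg E r v * a (Inl v)) - int (\<Sum>e\<in>E. a (Inr e))"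
    unfolding seq_len_def by simp
  also have "\<dots> = int (\<Sum>v\<in>?S. deg E r v) - int (card (supp_E E a))" using 1 3 by simp
  finally show ?thesis using 2 handshake[OF g] by linarith
qed

lemma sum_eq_card_iff:
  assumes "finite A" "\<forall>x\<in>A. f x \<ge> (1::nat)"
  shows "sum f A = card A \<longleftrightarrow> (\<forall>x\<in>A. f x = 1)"
proof -
  have "sum f A = (\<Sum>x\<in>A. (f x - 1) + 1)" using assms(2) by (intro sum.cong) auto
  also have "\<dots> = sum (\<lambda>x. f x - 1) A + card A" using sum.distrib[of "\<lambda>x. f x - 1" "\<lambda>x. 1" A] by simp
  finally have "sum f A = card A \<longleftrightarrow> sum (\<lambda>x. f x - 1) A = 0" by simp
  also have "\<dots> \<longleftrightarrow> (\<forall>x\<in>A. f x - 1 = 0)" using assms(1) by simp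
  also have "\<dots> \<longleftrightarrow> (\<forall>x\<in>A. f x = 1)" using assms(2) by force
  finally show ?thesis .
qed

lemma sum_ge_card:
  assumes "\<forall>x\<in>A. f x \<ge> (1::nat)"
  shows "sum f A \<ge> card A"
proof -
  have "card A = (\<Sum>x\<in>A. 1)" by simp
  also have "\<dots> \<le> sum f A" using assms by (intro sum_mono) auto
  finally show ?thesis .
qed

lemma ti_props:
  assumes g: "graph V E r" and T: "T \<subseteq> E"
  shows "agg V E r (tree_indicator V T)" "\<forall>x. tree_indicator V T x \<le> 1"
    "supp_V V (tree_indicator V T) = V" "supp_E E (tree_indicator V T) = T"
proof -
  show "agg V E r (tree_indicator V T)" using g T unfolding agg_def tree_indicator_def graph_def by auto
  show "\<forall>x. tree_indicator V T x \<le> 1" unfolding tree_indicator_def by (auto split: sum.split)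
  show "supp_V V (tree_indicator V T) = V" unfolding supp_V_def tree_indicator_def by auto
  show "supp_E E (tree_indicator V T) = T" using T unfolding supp_E_def tree_indicator_def by auto
qed

lemma agg_eq:
  assumes "agg V E r a" "agg V E r b" "\<forall>x. a x \<le> 1" "\<forall>x. b x \<le> 1"
    "supp_V V a = supp_V V b" "supp_E E a = supp_E E b"
  shows "a = b"
proof
  fix x
  have a01: "y = 0 \<or> y = 1" if "y \<le> (1::nat)" for y using that by linarith
  show "a x = b x"
  proof (cases x)
    case (Inl v)
    show ?thesis
    proof (cases "v \<in> V")
      case True
      then have "(a (Inl v) > 0) = (b (Inl v) > 0)" using assms(5) unfolding supp_V_def by blast
      then show ?thesis using Inl a01[OF assms(3)[rule_format, of x]] a01[OF assms(4)[rule_format, of x]] by auto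
    next
      case False then show ?thesis using Inl assms(1,2) unfolding agg_def by auto
    qed
  next
    case (Inr e)
    show ?thesis
    proof (cases "e \<in> E")
      case True
      then have "(a (Inr e) > 0) = (b (Inr e) > 0)" using assms(6) unfolding supp_E_def by blast
      then show ?thesis using Inr a01[OF assms(3)[rule_format, of x]] a01[OF assms(4)[rule_format, of x]] by auto
    next
      case False then show ?thesis using Inr assms(1,2) unfolding agg_def by auto
    qed
  qed
qed

theorem proposition4p11:
  fixes V :: "'v set" and E :: "'e set" and r :: "'e \<Rightarrow> 'v set"
  assumes "graph V E r" and "card V > 1" and "connected_graph V E r"
  shows "davenport V E r = 2 * int (card E) - int (card V) + 1
    \<and> (\<forall>a. is_atom V E r a \<longrightarrow>
           (seq_len V E r a = davenport V E r \<longleftrightarrow>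
             is_tree (supp_V V a) (supp_E E a) r \<and> {v\<in>V. deg E r v \<ge> 2} \<subseteq> supp_V V a))
    \<and> (\<forall>T. T \<subseteq> E \<and> is_tree V T r \<longrightarrow>
           is_atom V E r (tree_indicator V T) \<and>
           seq_len V E r (tree_indicator V T) = davenport V E r)
    \<and> ((\<forall>v\<in>V. deg E r v \<ge> 2) \<longrightarrow>
           bij_betw (supp_E E) {a. is_atom V E r a \<and> seq_len V E r a = davenport V E r}
                    {T. T \<subseteq> E \<and> is_tree V T r})"
proof -
  have g: "graph V E r" and cV: "card V > 1" and conn: "connected_graph V E r" using assms by auto
  have fin: "finite V" "finite E" and ends: "\<forall>e\<in>E. r e \<subseteq> V \<and> card (r e) = 2"
    using g unfolding graph_def by auto
  have Vne: "V \<noteq> {}" using cV by auto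
  have degpos: "deg E r v \<ge> 1" if v: "v \<in> V" for v
  proof -
    obtain w where w: "w \<in> V" "w \<noteq> v"
    proof (rule ccontr)
      assume "\<not> thesis"
      then have "V \<subseteq> {v}" using that by blast
      then have "card V \<le> 1" using card_mono[of "{v}" V] by simp
      then show False using cV by simp
    qed
    have "(v, w) \<in> (adj_rel E r)\<^sup>*" using conn v w unfolding connected_graph_def by blast
    then obtain y where "(v, y) \<in> adj_rel E r" using w(2) by (metis converse_rtranclE)
    then obtain e where e: "e \<in> E" "r e = {v, y}" unfolding adj_rel_def by blast
    then have "e \<in> {e\<in>E. v \<in> r e}" by simp
    moreover have "finite {e\<in>E. v \<in> r e}" using fin by simp
    ultimately have "card {e\<in>E. v \<in> r e} > 0" using card_gt_0_iff by blast
    then show ?thesis unfolding deg_def by simp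
  qed
  define N where "N = 2 * int (card E) - int (card V) + 1"
  have atom_facts: "seq_len V E r a \<le> N \<and> (seq_len V E r a = N \<longleftrightarrow>
      card (supp_E E a) + 1 = card (supp_V V a) \<and> (\<forall>v\<in>V - supp_V V a. deg E r v = 1))"
    if at: "is_atom V E r a" for a
  proof -
    let ?S = "supp_V V a" and ?F = "supp_E E a"
    have ag: "agg V E r a" using at by (rule atom_agg)
    have le1: "\<forall>x. a x \<le> 1" using atom_le1[OF at] by blast
    have cS: "connected_graph ?S ?F r" using atom_conn[OF g at] .
    have nz: "a \<noteq> (\<lambda>_. 0)" using at unfolding is_atom_def by blast
    have Sne: "?S \<noteq> {}" using agg_nonzero_vertex[OF g ag nz] unfolding supp_V_def by auto
    have SV: "?S \<subseteq> V" unfolding supp_V_def by auto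
    have FE: "?F \<subseteq> E" unfolding supp_E_def by auto
    have finS: "finite ?S" "finite ?F" using fin SV FE finite_subset by auto
    have endsS: "\<forall>e\<in>?F. r e \<subseteq> ?S" using agg_ends[OF g ag] by blast
    have c1: "card ?S \<le> card ?F + 1" using conn_card[OF finS cS Sne endsS] .
    have dsum: "(\<Sum>v\<in>V - ?S. deg E r v) \<ge> card (V - ?S)" using degpos by (intro sum_ge_card) auto
    have cVS: "card (V - ?S) = card V - card ?S" using SV fin by (simp add: card_Diff_subset finite_subset)
    have cSV: "card ?S \<le> card V" using SV fin by (simp add: card_mono)
    have sl: "seq_len V E r a = 2 * int (card E) - int (\<Sum>v\<in>V - ?S. deg E r v) - int (card ?F)"
      using seq_len_01[OF g ag le1] .
    have iff: "(\<Sum>v\<in>V - ?S. deg E r v) = card (V - ?S) \<longleftrightarrow> (\<forall>v\<in>V - ?S. deg E r v = 1)"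
      using fin degpos by (intro sum_eq_card_iff) auto
    show ?thesis
    proof
      show "seq_len V E r a \<le> N" using sl dsum cVS cSV c1 unfolding N_def by linarith
      show "seq_len V E r a = N \<longleftrightarrow> card ?F + 1 = card ?S \<and> (\<forall>v\<in>V - ?S. deg E r v = 1)"
        using sl dsum cVS cSV c1 iff unfolding N_def by linarith
    qed
  qed
  have tcard: "card T + 1 = card V" if T: "T \<subseteq> E" "is_tree V T r" for T
  proof -
    have finT: "finite T" using T fin finite_subset by auto
    have ct: "connected_graph V T r" "\<not> (\<exists>vs es. is_cycle T r vs es)" using T unfolding is_tree_def by auto
    have eT: "\<forall>e\<in>T. r e \<subseteq> V \<and> card (r e) = 2" using ends T by blast
    have "card V \<le> card T + 1" using conn_card[OF fin(1) finT ct(1) Vne] eT by blast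
    moreover have "card T + 1 \<le> card V" using tree_card[OF fin(1) finT ct(1) Vne eT ct(2)] .
    ultimately show ?thesis by simp
  qed
  have ti: "is_atom V E r (tree_indicator V T) \<and> seq_len V E r (tree_indicator V T) = 2 * int (card E) - int (card T)"
    if T: "T \<subseteq> E" "connected_graph V T r" for T
  proof -
    note P = ti_props[OF g T(1)]
    obtain v where v: "v \<in> V" using Vne by blast
    have "tree_indicator V T (Inl v) > 0" using v unfolding tree_indicator_def by simp
    then have "is_atom V E r (tree_indicator V T)"
      using conn_atom[OF g P(1,2) v] P(3,4) T(2) by simp
    moreover have "seq_len V E r (tree_indicator V T) = 2 * int (card E) - int (card T)"
      using seq_len_01[OF g P(1,2)] P(3,4) by simp
    ultimately show ?thesis by blast
  qed
  obtain T0 where T0: "T0 \<subseteq> E" "connected_graph V T0 r" "card T0 + 1 = card V"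
    using bfs_conn[OF fin(1) conn Vne] ends by blast
  have NA: "N \<in> seq_len V E r ` {a. is_atom V E r a}"
  proof -
    have "seq_len V E r (tree_indicator V T0) = N" using ti[OF T0(1,2)] T0(3) unfolding N_def by linarith
    then show ?thesis using ti[OF T0(1,2)] by (metis (mono_tags, lifting) image_eqI mem_Collect_eq)
  qed
  have lower: "seq_len V E r a \<ge> - int (card E)" if at: "is_atom V E r a" for a
  proof -
    have le1: "\<forall>x. a x \<le> 1" using atom_le1[OF at] by blast
    have "(\<Sum>e\<in>E. int (a (Inr e))) \<le> (\<Sum>e\<in>E. 1)" using le1 by (intro sum_mono) auto
    moreover have "(\<Sum>v\<in>V. int (deg E r v * a (Inl v))) \<ge> 0" by (intro sum_nonneg) auto
    ultimately show ?thesis unfolding seq_len_def by simp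
  qed
  have finA: "finite (seq_len V E r ` {a. is_atom V E r a})"
  proof (rule finite_subset)
    show "seq_len V E r ` {a. is_atom V E r a} \<subseteq> {- int (card E) .. N}"
      using lower atom_facts by auto
  qed simp
  have D: "davenport V E r = N"
    unfolding davenport_def
    using finA NA atom_facts by (intro Max_eqI) auto
  have P2: "seq_len V E r a = davenport V E r \<longleftrightarrow>
             is_tree (supp_V V a) (supp_E E a) r \<and> {v\<in>V. deg E r v \<ge> 2} \<subseteq> supp_V V a"
    if at: "is_atom V E r a" for a
  proof -
    let ?S = "supp_V V a" and ?F = "supp_E E a"
    have ag: "agg V E r a" using at by (rule atom_agg)
    have cS: "connected_graph ?S ?F r" using atom_conn[OF g at] .
    have nz: "a \<noteq> (\<lambda>_. 0)" using at unfolding is_atom_def by blast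
    have Sne: "?S \<noteq> {}" using agg_nonzero_vertex[OF g ag nz] unfolding supp_V_def by auto
    have SV: "?S \<subseteq> V" unfolding supp_V_def by auto
    have FE: "?F \<subseteq> E" unfolding supp_E_def by auto
    have finS: "finite ?S" "finite ?F" using fin SV FE finite_subset by auto
    have endsS: "\<forall>e\<in>?F. r e \<subseteq> ?S" using agg_ends[OF g ag] by blast
    have endsS2: "\<forall>e\<in>?F. r e \<subseteq> ?S \<and> card (r e) = 2" using endsS ends FE by blast
    have c1: "card ?S \<le> card ?F + 1" using conn_card[OF finS cS Sne endsS] .
    have AF: "seq_len V E r a = N \<longleftrightarrow> card ?F + 1 = card ?S \<and> (\<forall>v\<in>V - ?S. deg E r v = 1)"
      using atom_facts[OF at] by blast
    show ?thesis
    proof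
      assume "seq_len V E r a = davenport V E r"
      then have h: "card ?F + 1 = card ?S" "\<forall>v\<in>V - ?S. deg E r v = 1" using AF D by auto
      have "\<not> (\<exists>vs es. is_cycle ?F r vs es)" using conn_nocycle[OF finS cS Sne endsS] h(1) by auto
      then have "is_tree ?S ?F r" using Sne cS unfolding is_tree_def by blast
      moreover have "{v\<in>V. deg E r v \<ge> 2} \<subseteq> ?S" using h(2) by force
      ultimately show "is_tree ?S ?F r \<and> {v\<in>V. deg E r v \<ge> 2} \<subseteq> ?S" by blast
    next
      assume h: "is_tree ?S ?F r \<and> {v\<in>V. deg E r v \<ge> 2} \<subseteq> ?S"
      then have "\<not> (\<exists>vs es. is_cycle ?F r vs es)" unfolding is_tree_def by blast
      then have "card ?F + 1 \<le> card ?S" using tree_card[OF finS cS Sne endsS2] by blast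
      moreover have "\<forall>v\<in>V - ?S. deg E r v = 1"
      proof
        fix v assume v: "v \<in> V - ?S"
        then have "\<not> deg E r v \<ge> 2" using h by blast
        moreover have "deg E r v \<ge> 1" using degpos v by blast
        ultimately show "deg E r v = 1" by linarith
      qed
      ultimately show "seq_len V E r a = davenport V E r" using AF D c1 by auto
    qed
  qed
  have P3: "is_atom V E r (tree_indicator V T) \<and> seq_len V E r (tree_indicator V T) = davenport V E r"
    if T: "T \<subseteq> E" "is_tree V T r" for T
  proof -
    have "connected_graph V T r" using T unfolding is_tree_def by blast
    then show ?thesis using ti[OF T(1)] tcard[OF T] D unfolding N_def by auto
  qed
  have P4: "bij_betw (supp_E E) {a. is_atom V E r a \<and> seq_len V E r a = davenport V E r}
                    {T. T \<subseteq> E \<and> is_tree V T r}" if md: "\<forall>v\<in>V. deg E r v \<ge> 2"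
  proof -
    let ?M = "{a. is_atom V E r a \<and> seq_len V E r a = davenport V E r}"
    have SVeq: "supp_V V a = V \<and> is_tree V (supp_E E a) r" if a: "a \<in> ?M" for a
    proof -
      have at: "is_atom V E r a" using a by blast
      have "is_tree (supp_V V a) (supp_E E a) r \<and> {v\<in>V. deg E r v \<ge> 2} \<subseteq> supp_V V a"
        using P2[OF at] a by blast
      moreover have "{v\<in>V. deg E r v \<ge> 2} = V" using md by blast
      moreover have "supp_V V a \<subseteq> V" unfolding supp_V_def by auto
      ultimately show ?thesis by auto
    qed
    have "inj_on (supp_E E) ?M"
    proof (rule inj_onI)
      fix a b assume a: "a \<in> ?M" and b: "b \<in> ?M" and eq: "supp_E E a = supp_E E b"
      have at: "is_atom V E r a" "is_atom V E r b" using a b by auto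
      show "a = b"
        using agg_eq[OF atom_agg[OF at(1)] atom_agg[OF at(2)]] atom_le1[OF at(1)] atom_le1[OF at(2)]
          SVeq[OF a] SVeq[OF b] eq by blast
    qed
    moreover have "supp_E E ` ?M = {T. T \<subseteq> E \<and> is_tree V T r}"
    proof
      show "supp_E E ` ?M \<subseteq> {T. T \<subseteq> E \<and> is_tree V T r}"
        using SVeq unfolding supp_E_def by auto
    next
      show "{T. T \<subseteq> E \<and> is_tree V T r} \<subseteq> supp_E E ` ?M"
      proof
        fix T assume "T \<in> {T. T \<subseteq> E \<and> is_tree V T r}"
        then have T: "T \<subseteq> E" "is_tree V T r" by auto
        have "tree_indicator V T \<in> ?M" using P3[OF T] by blast
        moreover have "supp_E E (tree_indicator V T) = T" using ti_props[OF g T(1)] by blast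
        ultimately show "T \<in> supp_E E ` ?M" by (metis image_eqI)
      qed
    qed
    ultimately show ?thesis unfolding bij_betw_def by blast
  qed
  show ?thesis using D P2 P3 P4 unfolding N_def by blast
qed

end
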